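(* For the RCP model with queue feedback (parameters $C,a,b,\tau_1,\tau_2>0$, bifurcation parameter $\kappa$), the criticality of the Hopf bifurcation at $\kappa=\kappa_c$ (i.e. the sign of $\mu_2$) does not depend on the protocol parameter $a$, and there exist parameter values $b>0$, $\tau_1,\tau_2>0$ for which this Hopf bifurcation is sub-critical ($\mu_2<0$), in contrast with the model without queue feedback, for which it is always super-critical.
   Context: RCP model with queue feedback: $$\frac{d}{dt}R(t)=\kappa\,\frac{2aR(t)}{C(\tau_1+\tau_2)}\Big(C-y(t)-bC\,p\big(y(t)\big)\Big),\quad y(t)=R(t-\tau_1)+R(t-\tau_2),\quad p(y)=\frac{y}{2(C-y)},$$ with equilibrium $R^*=\frac{C(4+b-\sqrt{b^2+8b})}{8}$, linearization coefficient $\tilde a=\frac{a}{\tau_1+\tau_2}[1+2R^*/C]$, and critical value $\kappa_c=\dfrac{\pi}{2\tilde a(\tau_1+\tau_2)\cos\!\left(\frac{\pi(\tau_1-\tau_2)}{2(\tau_1+\tau_2)}\right)}$ at which the equilibrium loses stability via a Hopf bifurcation. $\mu_2=-\operatorname{Re}c_1(0)/\alpha'(0)$, where $c_1(0)$ is the first Lyapunov coefficient of the Hopf normal form at $\kappa_c$ and $\alpha'(0)=\operatorname{Re}(d\lambda/d\kappa)|_{\kappa_c}>0$; the bifurcation is super-critical if $\mu_2>0$ and sub-critical if $\mu_2<0$. The model without queue feedback is $\frac{d}{dt}R(t)=\kappa\,\frac{2aR(t)}{\gamma C(\tau_1+\tau_2)}(\gamma C-y(t))$, $\gamma\in(0,1]$.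 *)

theory Defs
  imports "HOL-Analysis.Analysis"
begin

text \<open>A scalar retarded equation u'(t) = F (u t) (u (t - tau1)) (u (t - tau2)),
  written in deviation variables (F 0 0 0 = 0). Delay index j = 0,1,2 stands for
  the delays 0, tau1, tau2.\<close>

type_synonym rhs = "real \<Rightarrow> real \<Rightarrow> real \<Rightarrow> real"

definition delays :: "real \<Rightarrow> real \<Rightarrow> nat \<Rightarrow> real" where
  "delays tau1 tau2 j = (if j = 0 then 0 else if j = 1 then tau1 else tau2)"

text \<open>n-th derivative of F along the ray t * v at t = 0 (i.e. the n-th order
  homogeneous Taylor form evaluated at v).\<close>
definition dirD :: "nat \<Rightarrow> rhs \<Rightarrow> (nat \<Rightarrow> real) \<Rightarrow> real" where
  "dirD n F v = (deriv ^^ n) (\<lambda>t. F (t * v 0) (t * v 1) (t * v 2)) 0"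

definition unitv :: "nat \<Rightarrow> nat \<Rightarrow> real" where
  "unitv j = (\<lambda>i. if i = j then 1 else 0)"

text \<open>Coefficients of the linearization: u'(t) = sum_j A_j u(t - r_j).\<close>
definition linc :: "rhs \<Rightarrow> nat \<Rightarrow> real" where
  "linc F j = dirD 1 F (unitv j)"

text \<open>Symmetric bilinear / trilinear forms of the second / third derivative
  (polarization).\<close>
definition bil :: "rhs \<Rightarrow> (nat \<Rightarrow> real) \<Rightarrow> (nat \<Rightarrow> real) \<Rightarrow> real" where
  "bil F x y = (dirD 2 F (\<lambda>j. x j + y j) - dirD 2 F (\<lambda>j. x j - y j)) / 4"

definition tril :: "rhs \<Rightarrow> (nat \<Rightarrow> real) \<Rightarrow> (nat \<Rightarrow> real) \<Rightarrow> (nat \<Rightarrow> real) \<Rightarrow> real" where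
  "tril F x y z =
     (\<Sum>e1\<in>{-1,1::real}. \<Sum>e2\<in>{-1,1::real}. \<Sum>e3\<in>{-1,1::real}.
        e1 * e2 * e3 * dirD 3 F (\<lambda>j. e1 * x j + e2 * y j + e3 * z j)) / 48"

definition cpart :: "bool \<Rightarrow> complex \<Rightarrow> real" where
  "cpart s c = (if s then Im c else Re c)"

definition cwt :: "bool \<Rightarrow> complex" where
  "cwt s = (if s then \<i> else 1)"

definition cbil :: "rhs \<Rightarrow> (nat \<Rightarrow> complex) \<Rightarrow> (nat \<Rightarrow> complex) \<Rightarrow> complex" where
  "cbil F a b = (\<Sum>s1\<in>(UNIV::bool set). \<Sum>s2\<in>(UNIV::bool set).
      cwt s1 * cwt s2 * complex_of_real (bil F (\<lambda>j. cpart s1 (a j)) (\<lambda>j. cpart s2 (b j))))"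

definition ctril :: "rhs \<Rightarrow> (nat \<Rightarrow> complex) \<Rightarrow> (nat \<Rightarrow> complex) \<Rightarrow> (nat \<Rightarrow> complex) \<Rightarrow> complex" where
  "ctril F a b c = (\<Sum>s1\<in>(UNIV::bool set). \<Sum>s2\<in>(UNIV::bool set). \<Sum>s3\<in>(UNIV::bool set).
      cwt s1 * cwt s2 * cwt s3 *
      complex_of_real (tril F (\<lambda>j. cpart s1 (a j)) (\<lambda>j. cpart s2 (b j)) (\<lambda>j. cpart s3 (c j))))"

definition charfun :: "rhs \<Rightarrow> real \<Rightarrow> real \<Rightarrow> complex \<Rightarrow> complex" where
  "charfun F tau1 tau2 l =
     l - (\<Sum>j<3. complex_of_real (linc F j) * exp (- l * complex_of_real (delays tau1 tau2 j)))"

definition charfun_deriv :: "rhs \<Rightarrow> real \<Rightarrow> real \<Rightarrow> complex \<Rightarrow> complex" where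
  "charfun_deriv F tau1 tau2 l =
     1 + (\<Sum>j<3. complex_of_real (linc F j * delays tau1 tau2 j)
                 * exp (- l * complex_of_real (delays tau1 tau2 j)))"

text \<open>First Lyapunov coefficient c_1(0) of the Hopf normal form on the centre
  manifold at the eigenvalue i*omega (standard Hassard--Kazarinoff--Wan
  centre-manifold reduction for retarded equations): with
  x_t = z q + conj z conj q + w, q(theta) = exp(i omega theta),
  the reduced equation is z' = i omega z + g(z, conj z) with
  g = N(x_t) / Delta'(i omega), N the nonlinear part of F.\<close>
definition first_lyap :: "rhs \<Rightarrow> real \<Rightarrow> real \<Rightarrow> real \<Rightarrow> complex" where
  "first_lyap F tau1 tau2 \<omega> =
    (let w = complex_of_real \<omega>;
         r = (\<lambda>j. complex_of_real (delays tau1 tau2 j));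
         q = (\<lambda>j. exp (- \<i> * w * r j));
         qb = (\<lambda>j. cnj (q j));
         D = 1 / charfun_deriv F tau1 tau2 (\<i> * w);
         g20 = D * cbil F q q;
         g11 = D * cbil F q qb;
         g02 = D * cbil F qb qb;
         E1 = cbil F q q / charfun F tau1 tau2 (2 * \<i> * w);
         E2 = cbil F q qb / charfun F tau1 tau2 0;
         w20 = (\<lambda>j. \<i> * g20 / w * q j + \<i> * cnj g02 / (3 * w) * qb j
                     + E1 * exp (- 2 * \<i> * w * r j));
         w11 = (\<lambda>j. - \<i> * g11 / w * q j + \<i> * cnj g11 / w * qb j + E2);
         g21 = D * (2 * cbil F q w11 + cbil F qb w20 + ctril F q q qb)
     in \<i> / (2 * w) * (g20 * g11 - 2 * (complex_of_real (cmod g11))\<^sup>2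
                       - (complex_of_real (cmod g02))\<^sup>2 / 3) + g21 / 2)"

text \<open>Transversality speed alpha'(0) = Re (d lambda / d kappa) at kappa_c for a
  kappa-family Fk of right-hand sides, obtained by implicit differentiation of
  Delta(kappa, lambda(kappa)) = 0 at lambda = i omega.\<close>
definition alpha_deriv :: "(real \<Rightarrow> rhs) \<Rightarrow> real \<Rightarrow> real \<Rightarrow> real \<Rightarrow> real \<Rightarrow> real" where
  "alpha_deriv Fk tau1 tau2 kc \<omega> =
     Re ((\<Sum>j<3. complex_of_real (deriv (\<lambda>k. linc (Fk k) j) kc)
                 * exp (- \<i> * complex_of_real \<omega> * complex_of_real (delays tau1 tau2 j)))
         / charfun_deriv (Fk kc) tau1 tau2 (\<i> * complex_of_real \<omega>))"

definition mu2 :: "(real \<Rightarrow> rhs) \<Rightarrow> real \<Rightarrow> real \<Rightarrow> real \<Rightarrow> real \<Rightarrow> real" where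
  "mu2 Fk tau1 tau2 kc \<omega> = - Re (first_lyap (Fk kc) tau1 tau2 \<omega>) / alpha_deriv Fk tau1 tau2 kc \<omega>"

definition kappa_crit :: "real \<Rightarrow> real \<Rightarrow> real \<Rightarrow> real" where
  "kappa_crit atl tau1 tau2 =
     pi / (2 * atl * (tau1 + tau2) * cos (pi * (tau1 - tau2) / (2 * (tau1 + tau2))))"

text \<open>Frequency of the critical root i*omega at kappa = kappa_c.\<close>
definition hopf_freq :: "real \<Rightarrow> real \<Rightarrow> real" where
  "hopf_freq tau1 tau2 = pi / (tau1 + tau2)"

definition pq :: "real \<Rightarrow> real \<Rightarrow> real" where
  "pq C y = y / (2 * (C - y))"

definition Rstar :: "real \<Rightarrow> real \<Rightarrow> real" where
  "Rstar C b = C * (4 + b - sqrt (b\<^sup>2 + 8 * b)) / 8"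

definition rcpq_rhs :: "real \<Rightarrow> real \<Rightarrow> real \<Rightarrow> real \<Rightarrow> real \<Rightarrow> real \<Rightarrow> rhs" where
  "rcpq_rhs C a b tau1 tau2 \<kappa> R0 R1 R2 =
     \<kappa> * (2 * a * R0 / (C * (tau1 + tau2))) * (C - (R1 + R2) - b * C * pq C (R1 + R2))"

definition rcpq_dev :: "real \<Rightarrow> real \<Rightarrow> real \<Rightarrow> real \<Rightarrow> real \<Rightarrow> real \<Rightarrow> rhs" where
  "rcpq_dev C a b tau1 tau2 \<kappa> u0 u1 u2 =
     rcpq_rhs C a b tau1 tau2 \<kappa> (Rstar C b + u0) (Rstar C b + u1) (Rstar C b + u2)"

definition atilde_q :: "real \<Rightarrow> real \<Rightarrow> real \<Rightarrow> real \<Rightarrow> real \<Rightarrow> real" where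
  "atilde_q C a b tau1 tau2 = a / (tau1 + tau2) * (1 + 2 * Rstar C b / C)"

definition mu2_q :: "real \<Rightarrow> real \<Rightarrow> real \<Rightarrow> real \<Rightarrow> real \<Rightarrow> real" where
  "mu2_q C a b tau1 tau2 =
     mu2 (rcpq_dev C a b tau1 tau2) tau1 tau2
         (kappa_crit (atilde_q C a b tau1 tau2) tau1 tau2) (hopf_freq tau1 tau2)"

definition rcp_rhs :: "real \<Rightarrow> real \<Rightarrow> real \<Rightarrow> real \<Rightarrow> real \<Rightarrow> real \<Rightarrow> rhs" where
  "rcp_rhs C \<gamma> a tau1 tau2 \<kappa> R0 R1 R2 =
     \<kappa> * (2 * a * R0 / (\<gamma> * C * (tau1 + tau2))) * (\<gamma> * C - (R1 + R2))"

text \<open>Equilibrium gamma C / 2; linearization coefficient a / (tau1 + tau2).\<close>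
definition rcp_dev :: "real \<Rightarrow> real \<Rightarrow> real \<Rightarrow> real \<Rightarrow> real \<Rightarrow> real \<Rightarrow> rhs" where
  "rcp_dev C \<gamma> a tau1 tau2 \<kappa> u0 u1 u2 =
     rcp_rhs C \<gamma> a tau1 tau2 \<kappa> (\<gamma> * C / 2 + u0) (\<gamma> * C / 2 + u1) (\<gamma> * C / 2 + u2)"

definition mu2_nq :: "real \<Rightarrow> real \<Rightarrow> real \<Rightarrow> real \<Rightarrow> real \<Rightarrow> real" where
  "mu2_nq C \<gamma> a tau1 tau2 =
     mu2 (rcp_dev C \<gamma> a tau1 tau2) tau1 tau2
         (kappa_crit (a / (tau1 + tau2)) tau1 tau2) (hopf_freq tau1 tau2)"

end

theory Submission
  imports Defs
begin

lemma deriv_funpow_open: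
  fixes fs :: "nat \<Rightarrow> real \<Rightarrow> real"
  assumes S: "open S" and f: "\<And>t. t \<in> S \<Longrightarrow> f t = fs 0 t"
    and d: "\<And>k t. k < n \<Longrightarrow> t \<in> S \<Longrightarrow> (fs k has_real_derivative fs (Suc k) t) (at t)"
  shows "t \<in> S \<Longrightarrow> (deriv ^^ n) f t = fs n t"
  using d
proof (induction n arbitrary: t)
  case 0 then show ?case using f by simp
next
  case (Suc n)
  have IH: "\<And>t. t \<in> S \<Longrightarrow> (deriv ^^ n) f t = fs n t"
    using Suc.IH Suc.prems(2) by auto
  have ev: "eventually (\<lambda>x. (deriv ^^ n) f x = fs n x) (nhds t)"
    using eventually_nhds_in_open[OF S Suc.prems(1)] by (rule eventually_mono) (use IH in auto)
  have "(deriv ^^ Suc n) f t = deriv ((deriv ^^ n) f) t" by simp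
  also have "\<dots> = deriv (fs n) t" by (rule deriv_cong_ev[OF ev refl])
  also have "\<dots> = fs (Suc n) t" using Suc.prems by (intro DERIV_imp_deriv) auto
  finally show ?case .
qed

definition GF :: "real \<Rightarrow> real \<Rightarrow> real \<Rightarrow> real \<Rightarrow> real \<Rightarrow> real \<Rightarrow> rhs" where
  "GF K R P Q E Y = (\<lambda>u0 u1 u2. K * (R + u0) * (P - (Y + (u1 + u2)) - Q * (Y + (u1 + u2)) / (E - (Y + (u1 + u2)))))"

definition gfs :: "real \<Rightarrow> real \<Rightarrow> real \<Rightarrow> real \<Rightarrow> real \<Rightarrow> real \<Rightarrow> real \<Rightarrow> real \<Rightarrow> nat \<Rightarrow> real \<Rightarrow> real" where
  "gfs K R P Q E Y v0 s k t =
    (let u = R + t * v0; iz = inverse (E - Y - t * s);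
         w = P + Q - Y - t * s - Q * E * iz;
         w1 = - s - Q * E * s * iz^2;
         w2 = - 2 * Q * E * s^2 * iz^3;
         w3 = - 6 * Q * E * s^3 * iz^4
     in if k = 0 then K * u * w else if k = 1 then K * (v0 * w + u * w1)
        else if k = 2 then K * (2 * v0 * w1 + u * w2) else K * (3 * v0 * w2 + u * w3))"

lemma gfs_deriv:
  assumes "k < 3" "E - Y - t * s \<noteq> 0"
  shows "(gfs K R P Q E Y v0 s k has_real_derivative gfs K R P Q E Y v0 s (Suc k) t) (at t)"
proof -
  have k: "k = 0 \<or> k = 1 \<or> k = 2" using assms by auto
  show ?thesis using k
  proof (elim disjE)
    assume "k = 0"
    then show ?thesis unfolding gfs_def Let_def using assms(2)
      by (auto intro!: derivative_eq_intros simp: algebra_simps power2_eq_square power3_eq_cube)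
  next
    assume "k = 1"
    then show ?thesis unfolding gfs_def Let_def using assms(2)
      by (auto intro!: derivative_eq_intros simp: algebra_simps power2_eq_square power3_eq_cube power4_eq_xxxx)
  next
    assume "k = 2"
    then show ?thesis unfolding gfs_def Let_def using assms(2)
      by (auto intro!: derivative_eq_intros simp: algebra_simps power2_eq_square power3_eq_cube power4_eq_xxxx)
  qed
qed


lemma dirD_GF:
  assumes EY: "E - Y \<noteq> 0" and n: "n \<le> 3"
  shows "dirD n (GF K R P Q E Y) v = gfs K R P Q E Y (v 0) (v 1 + v 2) n 0"
proof -
  let ?s = "v 1 + v 2"
  let ?S = "{t::real. E - Y - t * ?s \<noteq> 0}"
  have oS: "open ?S" by (intro open_Collect_neq continuous_intros)
  have 0: "(0::real) \<in> ?S" using EY by simp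
  have f: "GF K R P Q E Y (t * v 0) (t * v 1) (t * v 2) = gfs K R P Q E Y (v 0) ?s 0 t" if "t \<in> ?S" for t
  proof -
    have z: "E - Y - t * ?s \<noteq> 0" using that by simp
    have eq: "Q * (Y + (t * v 1 + t * v 2)) / (E - (Y + (t * v 1 + t * v 2))) = Q * E * inverse (E - Y - t * ?s) - Q"
      using z by (simp add: field_simps)
    have "GF K R P Q E Y (t * v 0) (t * v 1) (t * v 2) = K * (R + t * v 0) * (P - (Y + (t * v 1 + t * v 2)) - (Q * E * inverse (E - Y - t * ?s) - Q))"
      by (simp only: GF_def eq)
    then show ?thesis unfolding gfs_def Let_def by (simp add: algebra_simps)
  qed
  show ?thesis unfolding dirD_def
    by (rule deriv_funpow_open[OF oS, where fs = "gfs K R P Q E Y (v 0) ?s"])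
       (use f 0 n gfs_deriv in auto)
qed

definition "gc0 P Q E Y = P + Q - Y - Q * E / (E - Y)"
definition "gc1 Q E Y = - 1 - Q * E / (E - Y)^2"
definition "gc2 Q E Y = - 2 * Q * E / (E - Y)^3"
definition "gc3 Q E Y = - 6 * Q * E / (E - Y)^4"

lemma dirD_GF_123:
  assumes EY: "E - Y \<noteq> 0"
  shows "dirD 1 (GF K R P Q E Y) v = K * (v 0 * gc0 P Q E Y + R * (v 1 + v 2) * gc1 Q E Y)"
    and "dirD 2 (GF K R P Q E Y) v = K * (2 * v 0 * (v 1 + v 2) * gc1 Q E Y + R * (v 1 + v 2)^2 * gc2 Q E Y)"
    and "dirD 3 (GF K R P Q E Y) v = K * (3 * v 0 * (v 1 + v 2)^2 * gc2 Q E Y + R * (v 1 + v 2)^3 * gc3 Q E Y)"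
  using EY
  by (simp_all add: dirD_GF gfs_def gc0_def gc1_def gc2_def gc3_def Let_def field_simps)


lemma bil_form:
  assumes h2: "\<And>v. dirD 2 F v = K * (2 * v 0 * (v 1 + v 2) * g1 + R * (v 1 + v 2)^2 * g2)"
  shows "bil F x y = K * (g1 * (x 0 * (y 1 + y 2) + y 0 * (x 1 + x 2)) + R * g2 * (x 1 + x 2) * (y 1 + y 2))"
  unfolding bil_def h2 by (simp add: algebra_simps power2_eq_square)

lemma tril_form:
  assumes h3: "\<And>v. dirD 3 F v = K * (3 * v 0 * (v 1 + v 2)^2 * g2 + R * (v 1 + v 2)^3 * g3)"
  shows "tril F x y z = K * (g2 * (x 0 * (y 1 + y 2) * (z 1 + z 2) + y 0 * (x 1 + x 2) * (z 1 + z 2)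
      + z 0 * (x 1 + x 2) * (y 1 + y 2)) + R * g3 * (x 1 + x 2) * (y 1 + y 2) * (z 1 + z 2))"
  unfolding tril_def h3 by (simp add: algebra_simps power2_eq_square power3_eq_cube)

lemma cbil_form:
  assumes h2: "\<And>v. dirD 2 F v = K * (2 * v 0 * (v 1 + v 2) * g1 + R * (v 1 + v 2)^2 * g2)"
  shows "cbil F p q = of_real K * (of_real g1 * (p 0 * (q 1 + q 2) + q 0 * (p 1 + p 2))
           + of_real R * of_real g2 * (p 1 + p 2) * (q 1 + q 2))"
  unfolding cbil_def bil_form[OF h2] UNIV_bool
  by (simp add: cpart_def cwt_def complex_eq_iff algebra_simps)

lemma ctril_form:
  assumes h3: "\<And>v. dirD 3 F v = K * (3 * v 0 * (v 1 + v 2)^2 * g2 + R * (v 1 + v 2)^3 * g3)"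
  shows "ctril F p q r = of_real K * (of_real g2 * (p 0 * (q 1 + q 2) * (r 1 + r 2) + q 0 * (p 1 + p 2) * (r 1 + r 2)
      + r 0 * (p 1 + p 2) * (q 1 + q 2)) + of_real R * of_real g3 * (p 1 + p 2) * (q 1 + q 2) * (r 1 + r 2))"
  unfolding ctril_def tril_form[OF h3] UNIV_bool
  by (simp add: cpart_def cwt_def complex_eq_iff algebra_simps)

lemma linc_GF:
  assumes "E - Y \<noteq> 0"
  shows "linc (GF K R P Q E Y) j = K * (unitv j 0 * gc0 P Q E Y + R * (unitv j 1 + unitv j 2) * gc1 Q E Y)"
  unfolding linc_def dirD_GF_123(1)[OF assms] by simp

lemma alpha_GF:
  assumes "E - Y \<noteq> 0"
  shows "alpha_deriv (\<lambda>k. GF (k * M) R P Q E Y) tau1 tau2 kc w =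
    M * Re ((\<Sum>j<3. complex_of_real (unitv j 0 * gc0 P Q E Y + R * (unitv j 1 + unitv j 2) * gc1 Q E Y)
                 * exp (- \<i> * complex_of_real w * complex_of_real (delays tau1 tau2 j)))
         / charfun_deriv (GF (kc * M) R P Q E Y) tau1 tau2 (\<i> * complex_of_real w))"
proof -
  let ?l = "\<lambda>j. unitv j 0 * gc0 P Q E Y + R * (unitv j 1 + unitv j 2) * gc1 Q E Y"
  have d: "deriv (\<lambda>k. linc (GF (k * M) R P Q E Y) j) kc = M * ?l j" for j
  proof -
    have "(\<lambda>k. linc (GF (k * M) R P Q E Y) j) = (\<lambda>k. k * (M * ?l j))"
      using linc_GF[OF assms] by (simp add: algebra_simps)
    moreover have "((\<lambda>k. k * (M * ?l j)) has_real_derivative M * ?l j) (at kc)"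
      by (auto intro!: derivative_eq_intros)
    ultimately show ?thesis by (simp add: DERIV_imp_deriv)
  qed
  have "(\<Sum>j<3. complex_of_real (M * ?l j) * exp (- \<i> * complex_of_real w * complex_of_real (delays tau1 tau2 j)))
    = complex_of_real M * (\<Sum>j<3. complex_of_real (?l j) * exp (- \<i> * complex_of_real w * complex_of_real (delays tau1 tau2 j)))"
    by (simp add: sum_distrib_left mult.assoc)
  moreover have "\<And>X D. Re (complex_of_real M * X / D) = M * Re (X / D)"
    by (simp add: Re_divide algebra_simps add_divide_distrib)
  ultimately show ?thesis unfolding alpha_deriv_def d by simp
qed


lemma rcpq_GF:
  "rcpq_dev C a b tau1 tau2 = (\<lambda>k. GF (k * (2 * a / (C * (tau1 + tau2)))) (Rstar C b) C (b * C / 2) C (2 * Rstar C b))"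
proof (intro ext)
  fix k u0 u1 u2
  let ?R = "Rstar C b"
  have y: "?R + u1 + (?R + u2) = 2 * ?R + (u1 + u2)" by simp
  have "b * C * ((2 * ?R + (u1 + u2)) / (2 * (C - (2 * ?R + (u1 + u2))))) = b * C / 2 * (2 * ?R + (u1 + u2)) / (C - (2 * ?R + (u1 + u2)))"
    by simp
  then show "rcpq_dev C a b tau1 tau2 k u0 u1 u2 = GF (k * (2 * a / (C * (tau1 + tau2)))) ?R C (b * C / 2) C (2 * ?R) u0 u1 u2"
    unfolding rcpq_dev_def rcpq_rhs_def GF_def pq_def y by (simp add: algebra_simps)
qed

lemma Rstar_bounds:
  assumes C: "C > 0" and b: "b > 0"
  shows "0 < Rstar C b" "C - 2 * Rstar C b > 0"
proof -
  have s1: "sqrt (b\<^sup>2 + 8 * b) < 4 + b"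
    using b by (intro real_less_lsqrt) (auto simp: power2_eq_square algebra_simps)
  have s2: "b < sqrt (b\<^sup>2 + 8 * b)"
    using b by (intro real_less_rsqrt) (auto simp: power2_eq_square)
  show "0 < Rstar C b" unfolding Rstar_def using C s1 by simp
  show "C - 2 * Rstar C b > 0" unfolding Rstar_def using C s2 by (simp add: field_simps)
qed

lemma cos_crit_pos:
  assumes "tau1 > 0" "tau2 > 0"
  shows "cos (pi * (tau1 - tau2) / (2 * (tau1 + tau2))) > 0"
proof (rule cos_gt_zero_pi)
  have T: "tau1 + tau2 > 0" using assms by simp
  have "pi * (tau1 - tau2) < pi * (tau1 + tau2)" 
    using assms pi_gt_zero by (auto intro!: mult_strict_left_mono)
  moreover have "- (pi * (tau1 + tau2)) < pi * (tau1 - tau2)"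
  proof -
    have "0 < pi * tau1" using assms pi_gt_zero by simp
    then show ?thesis by (simp add: algebra_simps)
  qed
  ultimately show "pi * (tau1 - tau2) / (2 * (tau1 + tau2)) < pi / 2" "- (pi / 2) < pi * (tau1 - tau2) / (2 * (tau1 + tau2))"
    using T by (auto simp: field_simps)
qed

lemma kc_aux:
  assumes "x > 0" "T > 0" "C > 0" "W > 0" "cs > 0"
  shows "pi / (2 * (x / T * W) * T * cs) * (2 * x / (C * T)) = pi / (W * cs * C * T)"
  using assms by (simp add: field_simps)

lemma part1:
  assumes "C > 0" "a > 0" "a' > 0" "b > 0" "tau1 > 0" "tau2 > 0"
  shows "sgn (mu2_q C a b tau1 tau2) = sgn (mu2_q C a' b tau1 tau2)"
proof -
  let ?R = "Rstar C b"
  let ?T = "tau1 + tau2"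
  let ?cs = "cos (pi * (tau1 - tau2) / (2 * (tau1 + tau2)))"
  let ?W = "1 + 2 * ?R / C"
  have R: "0 < ?R" "C - 2 * ?R > 0" using Rstar_bounds assms by auto
  have EY: "C - 2 * ?R \<noteq> 0" using R by simp
  have cs: "?cs > 0" using cos_crit_pos assms by auto
  have W: "?W > 0" using R assms by (simp add: add_pos_pos)
  have T: "?T > 0" using assms by simp
  define Kc where "Kc = pi / (?W * ?cs * C * ?T)"
  have kc: "kappa_crit (atilde_q C x b tau1 tau2) tau1 tau2 * (2 * x / (C * ?T)) = Kc" if "x > 0" for x
    unfolding Kc_def kappa_crit_def atilde_q_def using kc_aux[OF that T assms(1) W cs] by simp
  define X where "X = Re ((\<Sum>j<3. complex_of_real (unitv j 0 * gc0 C (b * C / 2) C (2 * ?R) + ?R * (unitv j 1 + unitv j 2) * gc1 (b * C / 2) C (2 * ?R))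
                 * exp (- \<i> * complex_of_real (hopf_freq tau1 tau2) * complex_of_real (delays tau1 tau2 j)))
         / charfun_deriv (GF Kc ?R C (b * C / 2) C (2 * ?R)) tau1 tau2 (\<i> * complex_of_real (hopf_freq tau1 tau2)))"
  define L where "L = Re (first_lyap (GF Kc ?R C (b * C / 2) C (2 * ?R)) tau1 tau2 (hopf_freq tau1 tau2))"
  have mu: "mu2_q C x b tau1 tau2 = - L / ((2 * x / (C * ?T)) * X)" if "x > 0" for x
    unfolding mu2_q_def rcpq_GF mu2_def alpha_GF[OF EY] L_def X_def
    using kc[OF that] by simp
  have M: "2 * x / (C * ?T) > 0" if "x > 0" for x using that assms T by simp
  show ?thesis unfolding mu[OF assms(2)] mu[OF assms(3)]
    using assms by (simp add: sgn_mult)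
qed

lemma expi: "exp (\<i> * complex_of_real y) = Complex (cos y) (sin y)"
  by (simp add: cis_conv_exp[symmetric] complex_eq_iff)

lemma expq: "exp (- \<i> * complex_of_real w * complex_of_real t) = Complex (cos (w * t)) (- sin (w * t))"
proof -
  have "- \<i> * complex_of_real w * complex_of_real t = \<i> * complex_of_real (- (w * t))" by simp
  then show ?thesis by (simp only: expi) simp
qed

lemma expq2: "exp (- 2 * \<i> * complex_of_real w * complex_of_real t) = Complex (cos (2 * w * t)) (- sin (2 * w * t))"
proof -
  have "- 2 * \<i> * complex_of_real w * complex_of_real t = \<i> * complex_of_real (- (2 * w * t))" by simp
  then show ?thesis by (simp only: expi) simp
qed

lemma expc1: "exp (- (\<i> * complex_of_real w) * complex_of_real t) = Complex (cos (w * t)) (- sin (w * t))"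
  using expq[of w t] by simp

lemma expc2: "exp (- (2 * \<i> * complex_of_real w) * complex_of_real t) = Complex (cos (2 * w * t)) (- sin (2 * w * t))"
  using expq2[of w t] by simp

lemma rcp_GF:
  "rcp_dev C g a tau1 tau2 = (\<lambda>k. GF (k * (2 * a / (g * C * (tau1 + tau2)))) (g * C / 2) (g * C) 0 (g * C + 1) (g * C))"
  by (intro ext) (simp add: rcp_dev_def rcp_rhs_def GF_def algebra_simps)

lemma phi_sin:
  assumes "\<bar>x\<bar> \<le> pi" shows "0 \<le> x * sin x"
proof (cases "x \<ge> 0")
  case True then show ?thesis using assms by (simp add: sin_ge_zero)
next
  case False
  then have "0 \<le> sin (-x)" using assms by (intro sin_ge_zero) auto
  then show ?thesis using False by (simp add: mult_nonpos_nonpos)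
qed

lemma part3:
  assumes C: "C > 0" and g: "0 < g" "g \<le> 1" and a: "a > 0" and t: "tau1 > 0" "tau2 > 0"
  shows "mu2_nq C g a tau1 tau2 > 0"
proof -
  define T where "T = tau1 + tau2"
  have T: "T > 0" using t by (simp add: T_def)
  define M where "M = 2 * a / (g * C * T)"
  define R where "R = g * C / 2"
  define ph where "ph = pi * (tau1 - tau2) / (2 * T)"
  define c where "c = cos ph"
  define s where "s = sin ph"
  define d where "d = cos (2 * ph)"
  define s2 where "s2 = sin (2 * ph)"
  define w where "w = hopf_freq tau1 tau2"
  have w: "w = pi / T" unfolding w_def hopf_freq_def T_def ..
  define kc where "kc = kappa_crit (a / T) tau1 tau2"
  define K where "K = kc * M"
  define F where "F = GF K R (g * C) 0 (g * C + 1) (g * C)"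
  have c: "c > 0" unfolding c_def ph_def T_def using cos_crit_pos[OF t] .
  have kc: "kc = pi / (2 * (a / T) * T * c)" unfolding kc_def kappa_crit_def T_def c_def ph_def by simp
  have K: "K = pi / (c * g * C * T)"
    unfolding K_def kc M_def using T a C g c by (simp add: field_simps)
  have KR: "K * R = w / (2 * c)" unfolding K R_def w using c g C T by (simp add: field_simps)
  have Kpos: "K > 0" unfolding K using c g C T by simp
  have Rpos: "R > 0" unfolding R_def using g C by simp
  have dd: "2 * c^2 = 1 + d" unfolding c_def d_def by (simp add: cos_double_cos)
  have phb: "\<bar>ph\<bar> < pi / 2"
  proof -
    have lt: "\<bar>tau1 - tau2\<bar> < T" using t by (auto simp: T_def abs_if)
    have "\<bar>ph\<bar> = pi * \<bar>tau1 - tau2\<bar> / (2 * T)" unfolding ph_def using T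
      by (simp add: abs_mult abs_divide)
    also have "\<dots> < pi / 2"
    proof -
      have "pi * \<bar>tau1 - tau2\<bar> < pi * T" using lt pi_gt_zero by (rule mult_strict_left_mono)
      then show ?thesis using T by (simp add: field_simps)
    qed
    finally show ?thesis .
  qed
  have wt1: "w * tau1 = pi / 2 + ph" unfolding w ph_def using T by (simp add: field_simps T_def)
  have wt2: "w * tau2 = pi / 2 - ph" unfolding w ph_def using T by (simp add: field_simps T_def)
  have gc: "gc0 (g * C) 0 (g * C + 1) (g * C) = 0" "gc1 0 (g * C + 1) (g * C) = -1"
      "gc2 0 (g * C + 1) (g * C) = 0" "gc3 0 (g * C + 1) (g * C) = 0"
    by (simp_all add: gc0_def gc1_def gc2_def gc3_def)
  have EY: "g * C + 1 - g * C \<noteq> 0" by simp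
  have d2: "dirD 2 F v = K * (2 * v 0 * (v 1 + v 2) * (-1) + R * (v 1 + v 2)^2 * 0)" for v
    unfolding F_def dirD_GF_123(2)[OF EY] gc ..
  have d3: "dirD 3 F v = K * (3 * v 0 * (v 1 + v 2)^2 * 0 + R * (v 1 + v 2)^3 * 0)" for v
    unfolding F_def dirD_GF_123(3)[OF EY] gc ..
  have cb: "cbil F p q = - complex_of_real K * (p 0 * (q 1 + q 2) + q 0 * (p 1 + p 2))" for p q
    unfolding cbil_form[OF d2] by (simp add: algebra_simps)
  have ct: "ctril F p q r = 0" for p q r
    unfolding ctril_form[OF d3] by simp
  have lin: "linc F 0 = 0" "linc F 1 = - (K * R)" "linc F 2 = - (K * R)"
    unfolding F_def linc_GF[OF EY] gc by (simp_all add: unitv_def)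
  have lin2: "linc F (Suc 0) = - (K * R)" "linc F (Suc (Suc 0)) = - (K * R)"
    using lin by (simp_all add: eval_nat_numeral)
  define q where "q = (\<lambda>j. exp (- \<i> * complex_of_real w * complex_of_real (delays tau1 tau2 j)))"
  define qb where "qb = (\<lambda>j. cnj (q j))"
  have q: "q 0 = 1" "q 1 = Complex (- s) (- c)" "q 2 = Complex s (- c)"
  proof -
    show "q 0 = 1" by (simp add: q_def delays_def)
    show "q 1 = Complex (- s) (- c)" unfolding q_def delays_def expq
      by (simp add: wt1 cos_add sin_add s_def c_def)
    show "q 2 = Complex s (- c)" unfolding q_def delays_def expq
      by (simp add: wt2 cos_diff sin_diff s_def c_def)
  qed
  define ee where "ee = (\<lambda>j. exp (- 2 * \<i> * complex_of_real w * complex_of_real (delays tau1 tau2 j)))"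
  have e: "ee 0 = 1" "ee 1 = Complex (- d) s2" "ee 2 = Complex (- d) (- s2)"
  proof -
    show "ee 0 = 1" by (simp add: ee_def delays_def)
    have "2 * w * tau1 = pi + 2 * ph" using wt1 by (simp add: algebra_simps)
    then show "ee 1 = Complex (- d) s2" unfolding ee_def delays_def expq2
      by (simp add: d_def s2_def)
    have "2 * w * tau2 = pi - 2 * ph" using wt2 by (simp add: algebra_simps)
    then show "ee 2 = Complex (- d) (- s2)" unfolding ee_def delays_def expq2
      by (simp add: d_def s2_def)
  qed
  define u where "u = 1 + K * R * s * (tau1 - tau2)"
  define Dp where "Dp = Complex u (pi / 2)"
  have KRc: "K * R * c * T = pi / 2" unfolding KR w using c T by simp
  have cd: "charfun_deriv F tau1 tau2 (\<i> * complex_of_real w) = Dp"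
  proof -
    have "charfun_deriv F tau1 tau2 (\<i> * complex_of_real w) =
        1 + complex_of_real (- (K * R) * tau1) * q 1 + complex_of_real (- (K * R) * tau2) * q 2"
      unfolding charfun_deriv_def q_def by (simp add: eval_nat_numeral lin lin2 delays_def expq expc1)
    also have "\<dots> = Dp" unfolding q Dp_def u_def using KRc
      by (simp add: complex_eq_iff algebra_simps T_def)
    finally show ?thesis .
  qed
  have cf2: "charfun F tau1 tau2 (2 * \<i> * complex_of_real w) = Complex (- 2 * K * R * d) (2 * w)"
  proof -
    have "charfun F tau1 tau2 (2 * \<i> * complex_of_real w) =
        2 * \<i> * complex_of_real w + complex_of_real (K * R) * (ee 1 + ee 2)"
      unfolding charfun_def ee_def by (simp add: eval_nat_numeral lin lin2 delays_def expq2 expc2 algebra_simps)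
    also have "\<dots> = Complex (- 2 * K * R * d) (2 * w)" unfolding e
      by (simp add: complex_eq_iff)
    finally show ?thesis .
  qed
  have cf0: "charfun F tau1 tau2 0 = complex_of_real (2 * K * R)"
    unfolding charfun_def by (simp add: eval_nat_numeral lin lin2)
  define Z where "Z = 4 * K * c"
  define D where "D = 1 / charfun_deriv F tau1 tau2 (\<i> * complex_of_real w)"
  define g20 where "g20 = D * cbil F q q"
  define g11 where "g11 = D * cbil F q qb"
  define g02 where "g02 = D * cbil F qb qb"
  define E1 where "E1 = cbil F q q / charfun F tau1 tau2 (2 * \<i> * complex_of_real w)"
  define E2 where "E2 = cbil F q qb / charfun F tau1 tau2 0"
  define w20 where "w20 = (\<lambda>j. \<i> * g20 / complex_of_real w * q j + \<i> * cnj g02 / (3 * complex_of_real w) * qb j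
                     + E1 * exp (- 2 * \<i> * complex_of_real w * complex_of_real (delays tau1 tau2 j)))"
  define w11 where "w11 = (\<lambda>j. - \<i> * g11 / complex_of_real w * q j + \<i> * cnj g11 / complex_of_real w * qb j + E2)"
  define g21 where "g21 = D * (2 * cbil F q w11 + cbil F qb w20 + ctril F q q qb)"
  have FL: "first_lyap F tau1 tau2 w = \<i> / (2 * complex_of_real w) * (g20 * g11 - 2 * (complex_of_real (cmod g11))\<^sup>2
                       - (complex_of_real (cmod g02))\<^sup>2 / 3) + g21 / 2"
    unfolding first_lyap_def Let_def g21_def w20_def w11_def E1_def E2_def g20_def g11_def g02_def D_def q_def qb_def
    by (rule refl)
  have qb: "qb 0 = 1" "qb 1 = Complex (- s) c" "qb 2 = Complex s c"
    unfolding qb_def q by (simp_all add: complex_eq_iff)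
  have cqq: "cbil F q q = Complex 0 Z" unfolding cb q Z_def by (simp add: complex_eq_iff)
  have cqb: "cbil F q qb = 0" unfolding cb q qb by (simp add: complex_eq_iff)
  have cbb: "cbil F qb qb = Complex 0 (- Z)" unfolding cb qb Z_def by (simp add: complex_eq_iff)
  have g11: "g11 = 0" unfolding g11_def cqb by simp
  have E2: "E2 = 0" unfolding E2_def cqb by simp
  have w11: "w11 = (\<lambda>j. 0)" unfolding w11_def g11 E2 by simp
  have g21: "g21 = D * cbil F qb w20" unfolding g21_def w11 ct cb by simp
  have wpos: "w > 0" unfolding w using T by simp
  have DpD: "D = 1 / Dp" unfolding D_def cd ..
  have Dp0: "Dp \<noteq> 0" unfolding Dp_def by (simp add: complex_eq_iff)
  have sumw20: "cbil F qb w20 = - complex_of_real K * (- complex_of_real (4 * c * Z / (3 * w)) * \<i> * cnj D + 2 * E1 * Complex (- d) c)"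
  proof -
    have w20': "w20 = (\<lambda>j. \<i> * (D * Complex 0 Z) / complex_of_real w * q j + \<i> * (cnj D * Complex 0 Z) / (3 * complex_of_real w) * qb j + E1 * ee j)"
    proof -
      have cz: "cnj (Complex 0 (- Z)) = Complex 0 Z" by (simp add: complex_eq_iff)
      show ?thesis unfolding w20_def g20_def g02_def cqq cbb ee_def complex_cnj_mult cz ..
    qed
    show ?thesis unfolding cb w20' q qb e using wpos
      by (simp add: complex_eq_iff field_simps)
  qed
  have ReFL: "Re (first_lyap F tau1 tau2 w) = Re g21 / 2"
    unfolding FL g11 by simp
  have Reg21: "Re g21 = - 2 * K * Re (D * E1 * Complex (- d) c)"
  proof -
    have "g21 = \<i> * complex_of_real (K * (4 * c * Z / (3 * w))) * (D * cnj D) - 2 * complex_of_real K * (D * E1 * Complex (- d) c)"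
      unfolding g21 sumw20 by (simp add: algebra_simps)
    moreover have "Re (\<i> * complex_of_real y * (D * cnj D)) = 0" for y
      by (simp add: complex_mult_cnj)
    ultimately show ?thesis by simp
  qed
  define V where "V = Complex (- d) (2 * c)"
  have V0: "V \<noteq> 0" using c by (simp add: V_def complex_eq_iff)
  have E1: "E1 = complex_of_real Z * \<i> / (complex_of_real (w / c) * V)"
  proof -
    have "Complex (- 2 * K * R * d) (2 * w) = complex_of_real (w / c) * V"
      unfolding V_def using c KR by (simp add: complex_eq_iff field_simps)
    moreover have "Complex 0 Z = complex_of_real Z * \<i>" by (simp add: complex_eq_iff)
    ultimately show ?thesis unfolding E1_def cqq cf2 by simp
  qed
  have stepC: "D * E1 * Complex (- d) c = complex_of_real (Z * c / w) * (Complex (- c) (- d) / (Dp * V))"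
  proof -
    have "Complex (- c) (- d) = \<i> * Complex (- d) c" by (simp add: complex_eq_iff)
    then show ?thesis unfolding DpD E1 using Dp0 V0 wpos c by (simp add: field_simps)
  qed
  have uc: "u * c = c + ph * s"
  proof -
    have k: "K * R * c = pi / (2 * T)" using KRc T by (simp add: field_simps)
    have "u * c = c + (K * R * c) * s * (tau1 - tau2)" unfolding u_def by (simp add: algebra_simps)
    also have "\<dots> = c + pi / (2 * T) * s * (tau1 - tau2)" unfolding k ..
    also have "\<dots> = c + ph * s" unfolding ph_def by simp
    finally show ?thesis .
  qed
  have ps0: "0 \<le> ph * s" unfolding s_def using phi_sin[of ph] phb by simp
  have ps1: "ph * s \<le> pi / 2"
  proof -
    have "ph * s \<le> \<bar>ph\<bar> * \<bar>s\<bar>" by (simp add: abs_mult[symmetric])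
    also have "\<dots> \<le> \<bar>ph\<bar> * 1" unfolding s_def by (intro mult_left_mono) auto
    finally show ?thesis using phb by simp
  qed
  have c1: "c \<le> 1" unfolding c_def by simp
  have dpos: "pi * c^2 + pi * d^2 / 2 - u * c * d > 0"
  proof -
    have e1: "pi * c^2 = pi / 2 * (1 + d)" using dd by (simp add: algebra_simps)
    have ucb: "0 \<le> u * c" "u * c \<le> 1 + pi / 2" using uc ps0 ps1 c c1 by auto
    show ?thesis
    proof (cases "d \<ge> 0")
      case True
      have "u * c * d \<le> (1 + pi / 2) * d" using ucb True by (intro mult_right_mono) auto
      moreover have "pi / 2 * (1 + d) + pi * d^2 / 2 - (1 + pi / 2) * d > 0"
      proof -
        have "pi / 2 * (1 + d) + pi * d^2 / 2 - (1 + pi / 2) * d = pi / 2 * (1 + d^2) - d" by (simp add: algebra_simps)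
        moreover have "pi / 2 * (1 + d^2) \<ge> 1 + d^2"
        proof -
          have "1 * (1 + d^2) \<le> pi / 2 * (1 + d^2)" using pi_gt3 by (intro mult_right_mono) auto
          then show ?thesis by simp
        qed
        moreover have "1 + d^2 - d > 0" using zero_le_power2[of "d - 1/2"] by (simp add: power2_eq_square algebra_simps)
        ultimately show ?thesis by linarith
      qed
      ultimately show ?thesis using e1 by linarith
    next
      case False
      have "u * c * d \<le> 0" using ucb False by (simp add: mult_nonneg_nonpos)
      moreover have "1 + d + d^2 > 0" using zero_le_power2[of "d + 1/2"] by (simp add: power2_eq_square algebra_simps)
      then have "pi / 2 * (1 + d + d^2) > 0" using pi_gt_zero by simp
      moreover have "pi * c^2 + pi * d^2 / 2 = pi / 2 * (1 + d + d^2)" using e1 by (simp add: algebra_simps)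
      ultimately show ?thesis by linarith
    qed
  qed
  have ReQ: "Re (Complex (- c) (- d) / (Dp * V)) > 0"
  proof -
    have "Dp * V \<noteq> 0" using Dp0 V0 by simp
    then have den: "(Re (Dp * V))^2 + (Im (Dp * V))^2 > 0" by (simp add: complex_eq_iff sum_power2_gt_zero_iff)
    have "Re (Complex (- c) (- d)) * Re (Dp * V) + Im (Complex (- c) (- d)) * Im (Dp * V) = pi * c^2 + pi * d^2 / 2 - u * c * d"
      unfolding Dp_def V_def by (simp add: algebra_simps power2_eq_square)
    then show ?thesis unfolding Re_divide using den dpos by simp
  qed
  have ReFLneg: "Re (first_lyap F tau1 tau2 w) < 0"
  proof -
    have "Re (first_lyap F tau1 tau2 w) = - K * (Z * c / w) * Re (Complex (- c) (- d) / (Dp * V))"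
    proof -
      have Ro: "Re (complex_of_real r * z) = r * Re z" for r z by simp
      show ?thesis unfolding ReFL Reg21 stepC Ro by simp
    qed
    moreover have "K * (Z * c / w) > 0" using Kpos c wpos by (simp add: Z_def)
    then have "K * (Z * c / w) * Re (Complex (- c) (- d) / (Dp * V)) > 0" using ReQ by (rule mult_pos_pos)
    ultimately show ?thesis by linarith
  qed
  define Xa where "Xa = Re ((\<Sum>j<3. complex_of_real (unitv j 0 * gc0 (g * C) 0 (g * C + 1) (g * C) + R * (unitv j 1 + unitv j 2) * gc1 0 (g * C + 1) (g * C))
                 * exp (- \<i> * complex_of_real w * complex_of_real (delays tau1 tau2 j)))
         / charfun_deriv F tau1 tau2 (\<i> * complex_of_real w))"
  have rcp: "rcp_dev C g a tau1 tau2 = (\<lambda>k. GF (k * M) R (g * C) 0 (g * C + 1) (g * C))"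
    unfolding rcp_GF M_def R_def T_def ..
  have mu: "mu2_nq C g a tau1 tau2 = - Re (first_lyap F tau1 tau2 w) / (M * Xa)"
    unfolding mu2_nq_def rcp mu2_def alpha_GF[OF EY] Xa_def F_def K_def
    by (simp add: kc_def w_def T_def)
  have Xa: "Xa = Re (Complex 0 (2 * R * c) / Dp)"
  proof -
    have "(\<Sum>j<3. complex_of_real (unitv j 0 * gc0 (g * C) 0 (g * C + 1) (g * C) + R * (unitv j 1 + unitv j 2) * gc1 0 (g * C + 1) (g * C))
                 * exp (- \<i> * complex_of_real w * complex_of_real (delays tau1 tau2 j))) = - complex_of_real R * (q 1 + q 2)"
      unfolding gc q_def by (simp add: eval_nat_numeral unitv_def algebra_simps)
    also have "\<dots> = Complex 0 (2 * R * c)" unfolding q by (simp add: complex_eq_iff)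
    finally show ?thesis unfolding Xa_def cd by simp
  qed
  have Xapos: "Xa > 0"
  proof -
    have "(Re Dp)^2 + (Im Dp)^2 > 0" unfolding Dp_def by (simp add: sum_power2_gt_zero_iff)
    moreover have "2 * R * c * (pi / 2) > 0" using Rpos c by simp
    ultimately show ?thesis unfolding Xa Re_divide by (simp add: Dp_def)
  qed
  have Mpos: "M > 0" unfolding M_def using a g C T by simp
  have "M * Xa > 0" using Mpos Xapos by simp
  then show ?thesis unfolding mu using ReFLneg by (simp add: divide_neg_pos)
qed

lemma Rstar16: "Rstar C (1/6) = 3 * C / 8"
proof -
  have "sqrt ((1/6)\<^sup>2 + 8 * (1/6::real)) = 7/6" by (rule real_sqrt_unique) (simp_all add: power2_eq_square)
  then show ?thesis unfolding Rstar_def by simp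
qed

lemma part2:
  assumes C: "C > 0" and a: "a > 0"
  shows "mu2_q C a (1/6) 1 1 < 0"
proof -
  define R where "R = 3 * C / 8"
  define M where "M = 2 * a / (C * (1 + 1))"
  define kc where "kc = kappa_crit (atilde_q C a (1/6) 1 1) 1 1"
  define K where "K = kc * M"
  define Q where "Q = (1/6) * C / 2"
  define F where "F = GF K R C Q C (2 * R)"
  define w where "w = hopf_freq 1 1"
  have wv: "w = pi / 2" unfolding w_def hopf_freq_def by simp
  have Rv: "R = 3 * C / 8" unfolding R_def ..
  have Kv: "K = 2 * pi / (7 * C)"
    unfolding K_def kc_def M_def kappa_crit_def atilde_q_def Rstar16 using C a by (simp add: field_simps)
  have EY: "C - 2 * R \<noteq> 0" unfolding R_def using C by simp
  have gc: "gc0 C Q C (2 * R) = 0" "gc1 Q C (2 * R) = -7/3" "gc2 Q C (2 * R) = -32 / (3 * C)" "gc3 Q C (2 * R) = -128 / C^2"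
    unfolding gc0_def gc1_def gc2_def gc3_def Q_def R_def using C by (simp_all add: field_simps power2_eq_square power3_eq_cube power4_eq_xxxx)
  have d2: "dirD 2 F v = K * (2 * v 0 * (v 1 + v 2) * (-7/3) + R * (v 1 + v 2)^2 * (-32 / (3 * C)))" for v
    unfolding F_def dirD_GF_123(2)[OF EY] gc ..
  have d3: "dirD 3 F v = K * (3 * v 0 * (v 1 + v 2)^2 * (-32 / (3 * C)) + R * (v 1 + v 2)^3 * (-128 / C^2))" for v
    unfolding F_def dirD_GF_123(3)[OF EY] gc ..
  note cb = cbil_form[OF d2]
  note ct = ctril_form[OF d3]
  have lin: "linc F 0 = 0" "linc F (Suc 0) = - pi / 4" "linc F (Suc (Suc 0)) = - pi / 4"
  proof -
    have l: "linc F j = K * (unitv j 0 * gc0 C Q C (2 * R) + R * (unitv j 1 + unitv j 2) * gc1 Q C (2 * R))" for j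
      unfolding F_def by (rule linc_GF[OF EY])
    show "linc F 0 = 0" "linc F (Suc 0) = - pi / 4" "linc F (Suc (Suc 0)) = - pi / 4"
      unfolding l gc using C by (simp_all add: unitv_def Kv R_def)
  qed
  define q where "q = (\<lambda>j. exp (- \<i> * complex_of_real w * complex_of_real (delays 1 1 j)))"
  define qb where "qb = (\<lambda>j. cnj (q j))"
  define ee where "ee = (\<lambda>j. exp (- 2 * \<i> * complex_of_real w * complex_of_real (delays 1 1 j)))"
  have q: "q 0 = 1" "q 1 = Complex 0 (-1)" "q 2 = Complex 0 (-1)"
    unfolding q_def delays_def expq wv by (simp_all add: complex_eq_iff)
  have qb: "qb 0 = 1" "qb 1 = Complex 0 1" "qb 2 = Complex 0 1"
    unfolding qb_def q by (simp_all add: complex_eq_iff)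
  have e: "ee 0 = 1" "ee 1 = Complex (-1) 0" "ee 2 = Complex (-1) 0"
    unfolding ee_def delays_def expq2 wv by (simp_all add: complex_eq_iff)
  have cd: "charfun_deriv F 1 1 (\<i> * complex_of_real w) = Complex 1 (pi / 2)"
  proof -
    have "charfun_deriv F 1 1 (\<i> * complex_of_real w) = 1 + complex_of_real (- pi / 4) * q 1 + complex_of_real (- pi / 4) * q 2"
      unfolding charfun_deriv_def q_def by (simp add: eval_nat_numeral lin delays_def)
    then show ?thesis unfolding q by (simp add: complex_eq_iff)
  qed
  have cf2: "charfun F 1 1 (2 * \<i> * complex_of_real w) = Complex (- pi / 2) pi"
  proof -
    have "charfun F 1 1 (2 * \<i> * complex_of_real w) = 2 * \<i> * complex_of_real w - (complex_of_real (- pi / 4) * ee 1 + complex_of_real (- pi / 4) * ee 2)"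
      unfolding charfun_def ee_def by (simp add: eval_nat_numeral lin delays_def)
    then show ?thesis unfolding e wv by (simp add: complex_eq_iff)
  qed
  have cf0: "charfun F 1 1 0 = Complex (pi / 2) 0"
    unfolding charfun_def by (simp add: eval_nat_numeral lin complex_eq_iff)
  define D where "D = 1 / charfun_deriv F 1 1 (\<i> * complex_of_real w)"
  define g20 where "g20 = D * cbil F q q"
  define g11 where "g11 = D * cbil F q qb"
  define g02 where "g02 = D * cbil F qb qb"
  define E1 where "E1 = cbil F q q / charfun F 1 1 (2 * \<i> * complex_of_real w)"
  define E2 where "E2 = cbil F q qb / charfun F 1 1 0"
  define w20 where "w20 = (\<lambda>j. \<i> * g20 / complex_of_real w * q j + \<i> * cnj g02 / (3 * complex_of_real w) * qb j
                     + E1 * exp (- 2 * \<i> * complex_of_real w * complex_of_real (delays 1 1 j)))"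
  define w11 where "w11 = (\<lambda>j. - \<i> * g11 / complex_of_real w * q j + \<i> * cnj g11 / complex_of_real w * qb j + E2)"
  define g21 where "g21 = D * (2 * cbil F q w11 + cbil F qb w20 + ctril F q q qb)"
  have FL: "first_lyap F 1 1 w = \<i> / (2 * complex_of_real w) * (g20 * g11 - 2 * (complex_of_real (cmod g11))\<^sup>2
                       - (complex_of_real (cmod g02))\<^sup>2 / 3) + g21 / 2"
    unfolding first_lyap_def Let_def g21_def w20_def w11_def E1_def E2_def g20_def g11_def g02_def D_def q_def qb_def
    by (rule refl)
  define Nn where "Nn = 4 + pi^2"
  have N: "Nn > 0" unfolding Nn_def by (simp add: add_pos_nonneg)
  have w20j: "w20 j = \<i> * g20 / complex_of_real w * q j + \<i> * cnj g02 / (3 * complex_of_real w) * qb j + E1 * ee j" for j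
    unfolding w20_def ee_def ..
  have cqq: "cbil F q q = Complex (((32/7) * pi) / (C)) (((8/3) * pi) / (C))"
    unfolding cb q Kv Rv using C by (simp add: complex_eq_iff field_simps)
  have cqb: "cbil F q qb = Complex (((-32/7) * pi) / (C)) (0)"
    unfolding cb q qb Kv Rv using C by (simp add: complex_eq_iff field_simps)
  have cbb: "cbil F qb qb = Complex (((32/7) * pi) / (C)) (((-8/3) * pi) / (C))"
    unfolding cb qb Kv Rv using C by (simp add: complex_eq_iff field_simps)
  have ctr: "ctril F q q qb = Complex (((-256/21) * pi) / (C^2)) (((768/7) * pi) / (C^2))"
    unfolding ct q qb Kv Rv using C by (simp add: complex_eq_iff field_simps power2_eq_square)
  have Dv: "D = Complex (((4)) / (Nn)) (((-2) * pi) / (Nn))"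
    unfolding D_def cd using N by (simp add: complex_eq_iff field_simps power2_eq_square Re_divide Im_divide Nn_def)
  have g20v: "g20 = Complex (((128/7) * pi + (16/3) * pi^2) / (Nn * C)) (((32/3) * pi + (-64/7) * pi^2) / (Nn * C))"
    unfolding g20_def Dv cqq using N C by (simp add: complex_eq_iff field_simps power2_eq_square power3_eq_cube power4_eq_xxxx; simp add: Nn_def algebra_simps power2_eq_square power3_eq_cube power4_eq_xxxx)
  have g11v: "g11 = Complex (((-128/7) * pi) / (Nn * C)) (((64/7) * pi^2) / (Nn * C))"
    unfolding g11_def Dv cqb using N C by (simp add: complex_eq_iff field_simps power2_eq_square power3_eq_cube power4_eq_xxxx; simp add: Nn_def algebra_simps power2_eq_square power3_eq_cube power4_eq_xxxx)
  have g02v: "g02 = Complex (((128/7) * pi + (-16/3) * pi^2) / (Nn * C)) (((-32/3) * pi + (-64/7) * pi^2) / (Nn * C))"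
    unfolding g02_def Dv cbb using N C by (simp add: complex_eq_iff field_simps power2_eq_square power3_eq_cube power4_eq_xxxx; simp add: Nn_def algebra_simps power2_eq_square power3_eq_cube power4_eq_xxxx)
  have E1v: "E1 = Complex (((32/105)) / (C)) (((-496/105)) / (C))"
    unfolding E1_def cqq cf2 using C pi_gt_zero by (simp add: complex_eq_iff field_simps power2_eq_square Re_divide Im_divide)
  have E2v: "E2 = Complex (((-64/7)) / (C)) (0)"
    unfolding E2_def cqb cf0 using C pi_gt_zero by (simp add: complex_eq_iff field_simps Re_divide Im_divide power2_eq_square)
  have w20v0: "w20 0 = Complex (((-8576/315) + (256/21) * pi + (32/105) * pi^2) / (Nn * C)) (((448/15) + (64/9) * pi + (-496/105) * pi^2) / (Nn * C))"
    unfolding w20j g20v g02v E1v q qb e wv using N C pi_gt_zero by (simp add: complex_eq_iff field_simps power2_eq_square power3_eq_cube power4_eq_xxxx; simp add: Nn_def algebra_simps power2_eq_square power3_eq_cube power4_eq_xxxx)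
  have w20v1: "w20 1 = Complex (((2432/105) + (128/9) * pi + (-32/105) * pi^2) / (Nn * C)) (((10432/315) + (-512/21) * pi + (496/105) * pi^2) / (Nn * C))"
    unfolding w20j g20v g02v E1v q qb e wv using N C pi_gt_zero by (simp add: complex_eq_iff field_simps power2_eq_square power3_eq_cube power4_eq_xxxx; simp add: Nn_def algebra_simps power2_eq_square power3_eq_cube power4_eq_xxxx)
  have w20v2: "w20 2 = Complex (((2432/105) + (128/9) * pi + (-32/105) * pi^2) / (Nn * C)) (((10432/315) + (-512/21) * pi + (496/105) * pi^2) / (Nn * C))"
    unfolding w20j g20v g02v E1v q qb e wv using N C pi_gt_zero by (simp add: complex_eq_iff field_simps power2_eq_square power3_eq_cube power4_eq_xxxx; simp add: Nn_def algebra_simps power2_eq_square power3_eq_cube power4_eq_xxxx)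
  have w11v0: "w11 0 = Complex (((-256/7) + (256/7) * pi + (-64/7) * pi^2) / (Nn * C)) (0)"
    unfolding w11_def g11v E2v q qb wv using N C pi_gt_zero by (simp add: complex_eq_iff field_simps power2_eq_square power3_eq_cube power4_eq_xxxx; simp add: Nn_def algebra_simps power2_eq_square power3_eq_cube power4_eq_xxxx)
  have w11v1: "w11 1 = Complex (((256/7) + (-64/7) * pi^2) / (Nn * C)) (0)"
    unfolding w11_def g11v E2v q qb wv using N C pi_gt_zero by (simp add: complex_eq_iff field_simps power2_eq_square power3_eq_cube power4_eq_xxxx; simp add: Nn_def algebra_simps power2_eq_square power3_eq_cube power4_eq_xxxx)
  have w11v2: "w11 2 = Complex (((256/7) + (-64/7) * pi^2) / (Nn * C)) (0)"
    unfolding w11_def g11v E2v q qb wv using N C pi_gt_zero by (simp add: complex_eq_iff field_simps power2_eq_square power3_eq_cube power4_eq_xxxx; simp add: Nn_def algebra_simps power2_eq_square power3_eq_cube power4_eq_xxxx)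
  have cqw: "cbil F q w11 = Complex (((-1024/21) * pi + (256/21) * pi^3) / (Nn * C^2)) (((17408/147) * pi + (1024/21) * pi^2 + (-7936/147) * pi^3) / (Nn * C^2))"
    unfolding cb q w11v0 w11v1 w11v2 Kv Rv using N C by (simp add: complex_eq_iff field_simps power2_eq_square power3_eq_cube power4_eq_xxxx; simp add: Nn_def algebra_simps power2_eq_square power3_eq_cube power4_eq_xxxx)
  have cbw: "cbil F qb w20 = Complex (((353536/2205) * pi + (-160000/1323) * pi^2 + (34624/2205) * pi^3) / (Nn * C^2)) (((-752384/6615) * pi + (-1024/21) * pi^2 + (-3904/735) * pi^3) / (Nn * C^2))"
    unfolding cb qb w20v0 w20v1 w20v2 Kv Rv using N C by (simp add: complex_eq_iff field_simps power2_eq_square power3_eq_cube power4_eq_xxxx; simp add: Nn_def algebra_simps power2_eq_square power3_eq_cube power4_eq_xxxx)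
  have g21v: "g21 = Complex (((123904/2205) * pi + (470528/735) * pi^2 + (461056/2205) * pi^3 + (-5248/735) * pi^4) / (Nn^2 * C^2)) (((14869504/6615) * pi + (368128/2205) * pi^2 + (1505536/6615) * pi^3 + (-123008/2205) * pi^4) / (Nn^2 * C^2))"
    unfolding g21_def Dv cqw cbw ctr using N C by (simp add: complex_eq_iff field_simps power2_eq_square power3_eq_cube power4_eq_xxxx; simp add: Nn_def algebra_simps power2_eq_square power3_eq_cube power4_eq_xxxx)
  have ReFL: "Re (first_lyap F 1 1 w) = ((123008/2205) * pi + (-2624/735) * pi^2) / (Nn * C^2)"
    unfolding FL unfolding g20v g11v g21v wv using N C pi_gt_zero
    by (simp add: field_simps power2_eq_square power3_eq_cube power4_eq_xxxx; simp add: Nn_def algebra_simps power2_eq_square power3_eq_cube power4_eq_xxxx)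
  have ReFLpos: "Re (first_lyap F 1 1 w) > 0"
  proof -
    have "(2624/735) * pi < 123008/2205" using pi_less_4 by simp
    then have "0 < pi * (123008/2205 - (2624/735) * pi)" using pi_gt_zero by simp
    then have "0 < (123008/2205) * pi + (-2624/735) * pi^2" by (simp add: algebra_simps power2_eq_square)
    then show ?thesis unfolding ReFL using N C by simp
  qed
  define Xa where "Xa = Re ((\<Sum>j<3. complex_of_real (unitv j 0 * gc0 C Q C (2 * R) + R * (unitv j 1 + unitv j 2) * gc1 Q C (2 * R))
                 * exp (- \<i> * complex_of_real w * complex_of_real (delays 1 1 j)))
         / charfun_deriv F 1 1 (\<i> * complex_of_real w))"
  have rcp: "rcpq_dev C a (1/6) 1 1 = (\<lambda>k. GF (k * M) R C Q C (2 * R))"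
    unfolding rcpq_GF Rstar16 M_def R_def Q_def ..
  have mu: "mu2_q C a (1/6) 1 1 = - Re (first_lyap F 1 1 w) / (M * Xa)"
    unfolding mu2_q_def rcp mu2_def alpha_GF[OF EY] Xa_def F_def K_def
    by (simp add: kc_def w_def)
  have Xa: "Xa = Re (Complex 0 (7 * C / 4) / Complex 1 (pi / 2))"
  proof -
    have "(\<Sum>j<3. complex_of_real (unitv j 0 * gc0 C Q C (2 * R) + R * (unitv j 1 + unitv j 2) * gc1 Q C (2 * R))
                 * exp (- \<i> * complex_of_real w * complex_of_real (delays 1 1 j))) = complex_of_real (R * (-7/3)) * (q 1 + q 2)"
      unfolding gc q_def by (simp add: eval_nat_numeral unitv_def algebra_simps)
    also have "\<dots> = Complex 0 (7 * C / 4)" unfolding q R_def by (simp add: complex_eq_iff)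
    finally show ?thesis unfolding Xa_def cd by simp
  qed
  have Xapos: "Xa > 0"
  proof -
    have "(Re (Complex 1 (pi / 2)))^2 + (Im (Complex 1 (pi / 2)))^2 > 0" by (simp add: add_pos_nonneg)
    moreover have "7 * C / 4 * (pi / 2) > 0" using C by simp
    ultimately show ?thesis unfolding Xa Re_divide by simp
  qed
  have Mpos: "M > 0" unfolding M_def using a C by simp
  have "M * Xa > 0" using Mpos Xapos by simp
  then show ?thesis unfolding mu using ReFLpos by (simp add: divide_neg_pos)
qed

theorem mainTheorem8:
  shows "(\<forall>C a a' b tau1 tau2::real. C > 0 \<and> a > 0 \<and> a' > 0 \<and> b > 0 \<and> tau1 > 0 \<and> tau2 > 0 \<longrightarrow>
            sgn (mu2_q C a b tau1 tau2) = sgn (mu2_q C a' b tau1 tau2))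
       \<and> (\<forall>C a::real. C > 0 \<and> a > 0 \<longrightarrow>
            (\<exists>b tau1 tau2::real. b > 0 \<and> tau1 > 0 \<and> tau2 > 0 \<and> mu2_q C a b tau1 tau2 < 0))
       \<and> (\<forall>C \<gamma> a tau1 tau2::real. C > 0 \<and> 0 < \<gamma> \<and> \<gamma> \<le> 1 \<and> a > 0 \<and> tau1 > 0 \<and> tau2 > 0 \<longrightarrow>
            mu2_nq C \<gamma> a tau1 tau2 > 0)"
proof (intro conjI allI impI)
  fix C a a' b tau1 tau2 :: real
  assume "C > 0 \<and> a > 0 \<and> a' > 0 \<and> b > 0 \<and> tau1 > 0 \<and> tau2 > 0"
  then show "sgn (mu2_q C a b tau1 tau2) = sgn (mu2_q C a' b tau1 tau2)"
    using part1 by blast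
next
  fix C a :: real
  assume "C > 0 \<and> a > 0"
  then have "mu2_q C a (1/6) 1 1 < 0" using part2 by blast
  then show "\<exists>b tau1 tau2::real. b > 0 \<and> tau1 > 0 \<and> tau2 > 0 \<and> mu2_q C a b tau1 tau2 < 0"
    by (intro exI[of _ "1/6"] exI[of _ 1]) simp
next
  fix C \<gamma> a tau1 tau2 :: real
  assume "C > 0 \<and> 0 < \<gamma> \<and> \<gamma> \<le> 1 \<and> a > 0 \<and> tau1 > 0 \<and> tau2 > 0"
  then show "mu2_nq C \<gamma> a tau1 tau2 > 0" using part3 by blast
qed

end
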